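(* Let $C\subseteq\mathbb F_2^n$ be a classical linear code with parity check matrix $H$, let $\Gamma\subseteq2^{[n]}$, and let $\hat\Gamma=\{e\neq\emptyset: e\subseteq\gamma \text{ for some }\gamma\in\Gamma\}$. Then $\gamma_1\cup\gamma_2\in\Delta^{D}$ for all $\gamma_1,\gamma_2\in\Gamma$ if and only if $\mathrm{syn}(e_1)\neq0$ for all $e_1\in\hat\Gamma$ and $\mathrm{syn}(e_1+e_2)\neq0$ for all distinct $e_1,e_2\in\hat\Gamma$.
   Context: Vectors in $\mathbb F_2^n$ are identified with their support sets (so $e_1+e_2$ corresponds to symmetric difference). The syndrome is $\mathrm{syn}(e)=He$. $\Delta^{D}=\{\gamma\subseteq[n]: \mathrm{syn}(e)\neq0 \text{ for all nonzero } e \text{ with } \mathrm{supp}(e)\subseteq\gamma\}$. *)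

theory Defs
  imports Main "HOL-Library.Z2"
begin

text \<open>Vectors of F_2^n are identified with their support sets, subsets of {0..<n}.\<close>

definition syn :: "nat \<Rightarrow> (nat \<Rightarrow> nat \<Rightarrow> bit) \<Rightarrow> nat set \<Rightarrow> (nat \<Rightarrow> bit)" where
  "syn m H e = (\<lambda>i. if i < m then (\<Sum>j\<in>e. H i j) else 0)"

definition DeltaD :: "nat \<Rightarrow> nat \<Rightarrow> (nat \<Rightarrow> nat \<Rightarrow> bit) \<Rightarrow> nat set set" where
  "DeltaD n m H = {\<gamma>. \<gamma> \<subseteq> {0..<n} \<and>
      (\<forall>e. e \<noteq> {} \<and> e \<subseteq> \<gamma> \<longrightarrow> syn m H e \<noteq> (\<lambda>_. 0))}"

definition Gamma_hat :: "nat set set \<Rightarrow> nat set set" where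
  "Gamma_hat \<Gamma> = {e. e \<noteq> {} \<and> (\<exists>\<gamma>\<in>\<Gamma>. e \<subseteq> \<gamma>)}"

end

theory Submission
  imports Defs
begin

theorem lemma12:
  fixes n m :: nat and H :: "nat \<Rightarrow> nat \<Rightarrow> bit" and \<Gamma> :: "nat set set"
  assumes "\<Gamma> \<subseteq> Pow {0..<n}"
  shows "(\<forall>\<gamma>1\<in>\<Gamma>. \<forall>\<gamma>2\<in>\<Gamma>. \<gamma>1 \<union> \<gamma>2 \<in> DeltaD n m H) \<longleftrightarrow>
         ((\<forall>e1\<in>Gamma_hat \<Gamma>. syn m H e1 \<noteq> (\<lambda>_. 0)) \<and>
          (\<forall>e1\<in>Gamma_hat \<Gamma>. \<forall>e2\<in>Gamma_hat \<Gamma>. e1 \<noteq> e2 \<longrightarrow>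
              syn m H ((e1 - e2) \<union> (e2 - e1)) \<noteq> (\<lambda>_. 0)))"
proof
  assume L: "\<forall>\<gamma>1\<in>\<Gamma>. \<forall>\<gamma>2\<in>\<Gamma>. \<gamma>1 \<union> \<gamma>2 \<in> DeltaD n m H"
  show "(\<forall>e1\<in>Gamma_hat \<Gamma>. syn m H e1 \<noteq> (\<lambda>_. 0)) \<and>
          (\<forall>e1\<in>Gamma_hat \<Gamma>. \<forall>e2\<in>Gamma_hat \<Gamma>. e1 \<noteq> e2 \<longrightarrow>
              syn m H ((e1 - e2) \<union> (e2 - e1)) \<noteq> (\<lambda>_. 0))"
  proof (intro conjI ballI impI)
    fix e1 assume "e1 \<in> Gamma_hat \<Gamma>"
    then obtain g where g: "g \<in> \<Gamma>" "e1 \<subseteq> g" "e1 \<noteq> {}" unfolding Gamma_hat_def by blast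
    with L have "g \<union> g \<in> DeltaD n m H" by blast
    with g show "syn m H e1 \<noteq> (\<lambda>_. 0)" unfolding DeltaD_def by blast
  next
    fix e1 e2 assume "e1 \<in> Gamma_hat \<Gamma>" "e2 \<in> Gamma_hat \<Gamma>" "e1 \<noteq> e2"
    then obtain g1 g2 where g: "g1 \<in> \<Gamma>" "e1 \<subseteq> g1" "g2 \<in> \<Gamma>" "e2 \<subseteq> g2"
      unfolding Gamma_hat_def by blast
    with L have "g1 \<union> g2 \<in> DeltaD n m H" by blast
    moreover have "(e1 - e2) \<union> (e2 - e1) \<noteq> {}" using \<open>e1 \<noteq> e2\<close> by blast
    moreover have "(e1 - e2) \<union> (e2 - e1) \<subseteq> g1 \<union> g2" using g by blast
    ultimately show "syn m H ((e1 - e2) \<union> (e2 - e1)) \<noteq> (\<lambda>_. 0)" unfolding DeltaD_def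
      by (simp only: mem_Collect_eq) (meson)
  qed
next
  assume R: "(\<forall>e1\<in>Gamma_hat \<Gamma>. syn m H e1 \<noteq> (\<lambda>_. 0)) \<and>
          (\<forall>e1\<in>Gamma_hat \<Gamma>. \<forall>e2\<in>Gamma_hat \<Gamma>. e1 \<noteq> e2 \<longrightarrow>
              syn m H ((e1 - e2) \<union> (e2 - e1)) \<noteq> (\<lambda>_. 0))"
  show "\<forall>\<gamma>1\<in>\<Gamma>. \<forall>\<gamma>2\<in>\<Gamma>. \<gamma>1 \<union> \<gamma>2 \<in> DeltaD n m H"
  proof (intro ballI)
    fix g1 g2 assume g: "g1 \<in> \<Gamma>" "g2 \<in> \<Gamma>"
    have sub: "g1 \<union> g2 \<subseteq> {0..<n}" using g assms by blast
    have "syn m H e \<noteq> (\<lambda>_. 0)" if e: "e \<noteq> {}" "e \<subseteq> g1 \<union> g2" for e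
    proof -
      define a where "a = e \<inter> g1"
      define b where "b = e - g1"
      show ?thesis
      proof (cases "a = {}")
        case True
        hence "e \<in> Gamma_hat \<Gamma>" using e g unfolding Gamma_hat_def a_def by blast
        thus ?thesis using R by blast
      next
        case aF: False
        show ?thesis
        proof (cases "b = {}")
          case True
          hence "e \<in> Gamma_hat \<Gamma>" using e g unfolding Gamma_hat_def b_def by blast
          thus ?thesis using R by blast
        next
          case False
          have ah: "a \<in> Gamma_hat \<Gamma>" using aF g unfolding Gamma_hat_def a_def by blast
          have bh: "b \<in> Gamma_hat \<Gamma>" using False g e unfolding Gamma_hat_def b_def by blast
          have ne: "a \<noteq> b" using aF unfolding a_def b_def by blast
          have eq: "(a - b) \<union> (b - a) = e" unfolding a_def b_def by blast
          show ?thesis using R ah bh ne eq by (metis (no_types))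
        qed
      qed
    qed
    thus "g1 \<union> g2 \<in> DeltaD n m H" using sub unfolding DeltaD_def by blast
  qed
qed

end
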